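(* Let $A$ be a cubical set. If the morphism $A\to A^{\mathbb{I}}$, $a\mapsto\lambda\_.a$ (the exponential transpose of the projection $A\times\mathbb{I}\to A$) is an isomorphism, then $A\cong\Delta(a)$ for some set $a$.
   Context: $\mathcal{C}$ is the category of cubes: objects finite sets of names, morphisms $I\to J$ functions $J\to\mathrm{dM}(I)$ with $\mathrm{dM}(I)$ the free De Morgan algebra on $I$, composition by substitution. Cubical sets are presheaves on $\mathcal{C}$; $\mathbb{I}$ is the presheaf $I\mapsto\mathrm{dM}(I)$. $\Delta:\mathrm{Set}\to\widehat{\mathcal{C}}$ is the constant presheaf functor. *)

theory Defs
  imports Main "HOL-Library.FuncSet"
begin

datatype dmt = DVar nat | DZero | DOne | DMeet dmt dmt | DJoin dmt dmt | DNeg dmt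

inductive dm_eq :: "dmt \<Rightarrow> dmt \<Rightarrow> bool" where
  dm_refl: "dm_eq x x"
| dm_sym: "dm_eq x y \<Longrightarrow> dm_eq y x"
| dm_trans: "dm_eq x y \<Longrightarrow> dm_eq y z \<Longrightarrow> dm_eq x z"
| cong_meet: "dm_eq x x' \<Longrightarrow> dm_eq y y' \<Longrightarrow> dm_eq (DMeet x y) (DMeet x' y')"
| cong_join: "dm_eq x x' \<Longrightarrow> dm_eq y y' \<Longrightarrow> dm_eq (DJoin x y) (DJoin x' y')"
| cong_neg: "dm_eq x x' \<Longrightarrow> dm_eq (DNeg x) (DNeg x')"
| meet_assoc: "dm_eq (DMeet (DMeet x y) z) (DMeet x (DMeet y z))"
| join_assoc: "dm_eq (DJoin (DJoin x y) z) (DJoin x (DJoin y z))"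
| meet_comm: "dm_eq (DMeet x y) (DMeet y x)"
| join_comm: "dm_eq (DJoin x y) (DJoin y x)"
| meet_absorb: "dm_eq (DMeet x (DJoin x y)) x"
| join_absorb: "dm_eq (DJoin x (DMeet x y)) x"
| distrib: "dm_eq (DMeet x (DJoin y z)) (DJoin (DMeet x y) (DMeet x z))"
| join_zero: "dm_eq (DJoin x DZero) x"
| meet_one: "dm_eq (DMeet x DOne) x"
| neg_neg: "dm_eq (DNeg (DNeg x)) x"
| de_morgan: "dm_eq (DNeg (DMeet x y)) (DJoin (DNeg x) (DNeg y))"
| neg_zero: "dm_eq (DNeg DZero) DOne"

quotient_type dm = dmt / dm_eq
  morphisms rep_dm abs_dm
  by (rule equivpI; rule reflpI sympI transpI) (auto intro: dm_eq.intros)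

fun dvars :: "dmt \<Rightarrow> nat set" where
  "dvars (DVar i) = {i}"
| "dvars DZero = {}"
| "dvars DOne = {}"
| "dvars (DMeet x y) = dvars x \<union> dvars y"
| "dvars (DJoin x y) = dvars x \<union> dvars y"
| "dvars (DNeg x) = dvars x"

fun tsubst :: "(nat \<Rightarrow> dmt) \<Rightarrow> dmt \<Rightarrow> dmt" where
  "tsubst s (DVar i) = s i"
| "tsubst s DZero = DZero"
| "tsubst s DOne = DOne"
| "tsubst s (DMeet x y) = DMeet (tsubst s x) (tsubst s y)"
| "tsubst s (DJoin x y) = DJoin (tsubst s x) (tsubst s y)"
| "tsubst s (DNeg x) = DNeg (tsubst s x)"

text \<open>dM(I): the free De Morgan algebra on the finite set of names I
  (as a subalgebra of the free De Morgan algebra on all names).\<close>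
definition dM :: "nat set \<Rightarrow> dm set" where
  "dM I = {x. \<exists>t. x = abs_dm t \<and> dvars t \<subseteq> I}"

definition dm_var :: "nat \<Rightarrow> dm" where
  "dm_var i = abs_dm (DVar i)"

text \<open>Substitution (well defined on classes since dm_eq is a congruence closed under substitution).\<close>
definition dm_subst :: "(nat \<Rightarrow> dm) \<Rightarrow> dm \<Rightarrow> dm" where
  "dm_subst s x = abs_dm (tsubst (rep_dm \<circ> s) (rep_dm x))"

text \<open>Morphisms I \<rightarrow> J: functions J \<rightarrow> dM(I) (extensional outside J).\<close>
definition hom :: "nat set \<Rightarrow> nat set \<Rightarrow> (nat \<Rightarrow> dm) set" where
  "hom I J = (J \<rightarrow>\<^sub>E dM I)"

definition cid :: "nat set \<Rightarrow> nat \<Rightarrow> dm" where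
  "cid I = restrict dm_var I"

text \<open>For f : I \<rightarrow> J and g : J \<rightarrow> K, cmp K f g = g \<circ> f : I \<rightarrow> K (substitution).\<close>
definition cmp :: "nat set \<Rightarrow> (nat \<Rightarrow> dm) \<Rightarrow> (nat \<Rightarrow> dm) \<Rightarrow> nat \<Rightarrow> dm" where
  "cmp K f g = restrict (\<lambda>k. dm_subst f (g k)) K"

definition cubical_set ::
  "(nat set \<Rightarrow> 'a set) \<Rightarrow> (nat set \<Rightarrow> nat set \<Rightarrow> (nat \<Rightarrow> dm) \<Rightarrow> 'a \<Rightarrow> 'a) \<Rightarrow> bool" where
  "cubical_set A0 Ar \<longleftrightarrow>
     (\<forall>I J f a. finite I \<and> finite J \<and> f \<in> hom I J \<and> a \<in> A0 J \<longrightarrow> Ar I J f a \<in> A0 I) \<and>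
     (\<forall>I a. finite I \<and> a \<in> A0 I \<longrightarrow> Ar I I (cid I) a = a) \<and>
     (\<forall>I J K f g a. finite I \<and> finite J \<and> finite K \<and> f \<in> hom I J \<and> g \<in> hom J K \<and> a \<in> A0 K
        \<longrightarrow> Ar I J f (Ar J K g a) = Ar I K (cmp K f g) a)"

definition nat_trans ::
  "(nat set \<Rightarrow> 'a set) \<Rightarrow> (nat set \<Rightarrow> nat set \<Rightarrow> (nat \<Rightarrow> dm) \<Rightarrow> 'a \<Rightarrow> 'a) \<Rightarrow>
   (nat set \<Rightarrow> 'b set) \<Rightarrow> (nat set \<Rightarrow> nat set \<Rightarrow> (nat \<Rightarrow> dm) \<Rightarrow> 'b \<Rightarrow> 'b) \<Rightarrow>
   (nat set \<Rightarrow> 'a \<Rightarrow> 'b) \<Rightarrow> bool" where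
  "nat_trans A0 Ar B0 Br \<eta> \<longleftrightarrow>
     (\<forall>I a. finite I \<and> a \<in> A0 I \<longrightarrow> \<eta> I a \<in> B0 I) \<and>
     (\<forall>I J f a. finite I \<and> finite J \<and> f \<in> hom I J \<and> a \<in> A0 J
        \<longrightarrow> \<eta> I (Ar I J f a) = Br I J f (\<eta> J a))"

definition nat_iso ::
  "(nat set \<Rightarrow> 'a set) \<Rightarrow> (nat set \<Rightarrow> nat set \<Rightarrow> (nat \<Rightarrow> dm) \<Rightarrow> 'a \<Rightarrow> 'a) \<Rightarrow>
   (nat set \<Rightarrow> 'b set) \<Rightarrow> (nat set \<Rightarrow> nat set \<Rightarrow> (nat \<Rightarrow> dm) \<Rightarrow> 'b \<Rightarrow> 'b) \<Rightarrow>
   (nat set \<Rightarrow> 'a \<Rightarrow> 'b) \<Rightarrow> bool" where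
  "nat_iso A0 Ar B0 Br \<eta> \<longleftrightarrow> nat_trans A0 Ar B0 Br \<eta> \<and>
     (\<exists>\<theta>. nat_trans B0 Br A0 Ar \<theta> \<and>
        (\<forall>I a. finite I \<and> a \<in> A0 I \<longrightarrow> \<theta> I (\<eta> I a) = a) \<and>
        (\<forall>I b. finite I \<and> b \<in> B0 I \<longrightarrow> \<eta> I (\<theta> I b) = b))"

definition isomorphic ::
  "(nat set \<Rightarrow> 'a set) \<Rightarrow> (nat set \<Rightarrow> nat set \<Rightarrow> (nat \<Rightarrow> dm) \<Rightarrow> 'a \<Rightarrow> 'a) \<Rightarrow>
   (nat set \<Rightarrow> 'b set) \<Rightarrow> (nat set \<Rightarrow> nat set \<Rightarrow> (nat \<Rightarrow> dm) \<Rightarrow> 'b \<Rightarrow> 'b) \<Rightarrow> bool" where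
  "isomorphic A0 Ar B0 Br \<longleftrightarrow> (\<exists>\<eta>. nat_iso A0 Ar B0 Br \<eta>)"

definition Delta0 :: "'a set \<Rightarrow> nat set \<Rightarrow> 'a set" where
  "Delta0 a I = a"

definition DeltaR :: "nat set \<Rightarrow> nat set \<Rightarrow> (nat \<Rightarrow> dm) \<Rightarrow> 'a \<Rightarrow> 'a" where
  "DeltaR I J f x = x"

text \<open>(A^\<I>)(I) = Hom(y(I) \<times> \<I>, A): natural families
  \<theta>_K : Hom(K,I) \<times> dM(K) \<rightarrow> A(K), extensional (undefined off their domain).\<close>
definition Exp0 ::
  "(nat set \<Rightarrow> 'a set) \<Rightarrow> (nat set \<Rightarrow> nat set \<Rightarrow> (nat \<Rightarrow> dm) \<Rightarrow> 'a \<Rightarrow> 'a) \<Rightarrow>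
   nat set \<Rightarrow> (nat set \<Rightarrow> (nat \<Rightarrow> dm) \<times> dm \<Rightarrow> 'a) set" where
  "Exp0 A0 Ar I = {\<theta>.
     (\<forall>K x. \<not> (finite K \<and> x \<in> hom K I \<times> dM K) \<longrightarrow> \<theta> K x = undefined) \<and>
     (\<forall>K f r. finite K \<and> f \<in> hom K I \<and> r \<in> dM K \<longrightarrow> \<theta> K (f, r) \<in> A0 K) \<and>
     (\<forall>K L g f r. finite K \<and> finite L \<and> g \<in> hom L K \<and> f \<in> hom K I \<and> r \<in> dM K \<longrightarrow>
        \<theta> L (cmp I g f, dm_subst g r) = Ar L K g (\<theta> K (f, r)))}"

text \<open>Restriction along h : J \<rightarrow> I: precomposition with y(h) \<times> id.\<close>
definition ExpR ::
  "nat set \<Rightarrow> nat set \<Rightarrow> (nat \<Rightarrow> dm) \<Rightarrow> (nat set \<Rightarrow> (nat \<Rightarrow> dm) \<times> dm \<Rightarrow> 'a)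
   \<Rightarrow> (nat set \<Rightarrow> (nat \<Rightarrow> dm) \<times> dm \<Rightarrow> 'a)" where
  "ExpR J I h \<theta> = (\<lambda>K x. if finite K \<and> x \<in> hom K J \<times> dM K
                          then \<theta> K (cmp I (fst x) h, snd x) else undefined)"

definition const_map ::
  "(nat set \<Rightarrow> nat set \<Rightarrow> (nat \<Rightarrow> dm) \<Rightarrow> 'a \<Rightarrow> 'a) \<Rightarrow>
   nat set \<Rightarrow> 'a \<Rightarrow> (nat set \<Rightarrow> (nat \<Rightarrow> dm) \<times> dm \<Rightarrow> 'a)" where
  "const_map Ar I a = (\<lambda>K x. if finite K \<and> x \<in> hom K I \<times> dM K
                              then Ar K I (fst x) a else undefined)"

end

theory Submission
  imports Defs
begin

lemma rep_abs_dm: "dm_eq (rep_dm (abs_dm t)) t"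
proof -
  have "abs_dm (rep_dm (abs_dm t)) = abs_dm t"
    by (rule Quotient3_abs_rep[OF Quotient3_dm])
  thus ?thesis using dm.abs_eq_iff by blast
qed

lemma tsubst_cong: "dm_eq x y \<Longrightarrow> dm_eq (tsubst s x) (tsubst s y)"
proof (induction rule: dm_eq.induct)
qed (simp_all add: dm_eq.intros(1,4-) , (erule dm_sym) , (erule (1) dm_trans))

lemma tsubst_cong2: "(\<And>v. v \<in> dvars t \<Longrightarrow> dm_eq (s v) (s' v)) \<Longrightarrow> dm_eq (tsubst s t) (tsubst s' t)"
  by (induction t) (simp_all add: dm_eq.intros(1,4-))

lemma dvars_tsubst: "dvars (tsubst s t) = (\<Union>v\<in>dvars t. dvars (s v))"
  by (induction t) auto

lemma dm_subst_in:
  assumes g: "g \<in> hom L K" and r: "r \<in> dM K"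
  shows "dm_subst g r \<in> dM L"
proof -
  obtain t where t: "r = abs_dm t" "dvars t \<subseteq> K" using r unfolding dM_def by auto
  have "\<forall>k\<in>K. \<exists>u. g k = abs_dm u \<and> dvars u \<subseteq> L" using g unfolding hom_def dM_def by auto
  then obtain s where s: "\<And>k. k \<in> K \<Longrightarrow> g k = abs_dm (s k) \<and> dvars (s k) \<subseteq> L" by metis
  have e1: "dm_eq (tsubst (rep_dm \<circ> g) (rep_dm r)) (tsubst (rep_dm \<circ> g) t)"
    using t(1) rep_abs_dm tsubst_cong by blast
  have e2: "dm_eq (tsubst (rep_dm \<circ> g) t) (tsubst s t)"
    by (rule tsubst_cong2) (use t(2) s rep_abs_dm in auto)
  have "dm_subst g r = abs_dm (tsubst s t)"
    unfolding dm_subst_def dm.abs_eq_iff using e1 e2 dm_trans by blast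
  moreover have "dvars (tsubst s t) \<subseteq> L" using t(2) s by (auto simp: dvars_tsubst)
  ultimately show ?thesis unfolding dM_def by auto
qed

lemma cmp_hom: "g \<in> hom L K \<Longrightarrow> f \<in> hom K J \<Longrightarrow> cmp J g f \<in> hom L J"
  unfolding cmp_def hom_def
proof -
  assume g: "g \<in> K \<rightarrow>\<^sub>E dM L" and f: "f \<in> J \<rightarrow>\<^sub>E dM K"
  have "\<forall>k\<in>J. dm_subst g (f k) \<in> dM L"
    using f dm_subst_in[of g L K, unfolded hom_def, OF g] by auto
  thus "(\<lambda>k\<in>J. dm_subst g (f k)) \<in> J \<rightarrow>\<^sub>E dM L" by (simp add: restrict_PiE_iff)
qed

lemma var_in: "i \<in> I \<Longrightarrow> dm_var i \<in> dM I"
  unfolding dM_def dm_var_def by (rule CollectI, rule exI[of _ "DVar i"]) auto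

lemma incl_hom: "J \<subseteq> I \<Longrightarrow> restrict dm_var J \<in> hom I J"
  unfolding hom_def using var_in by auto

lemma csC: "cubical_set A0 Ar \<Longrightarrow> finite I \<Longrightarrow> finite J \<Longrightarrow> f \<in> hom I J \<Longrightarrow> a \<in> A0 J \<Longrightarrow> Ar I J f a \<in> A0 I"
  unfolding cubical_set_def by (drule conjunct1) simp
lemma csI: "cubical_set A0 Ar \<Longrightarrow> finite I \<Longrightarrow> a \<in> A0 I \<Longrightarrow> Ar I I (cid I) a = a"
  unfolding cubical_set_def by (drule conjunct2, drule conjunct1) simp
lemma csM: "cubical_set A0 Ar \<Longrightarrow> finite I \<Longrightarrow> finite J \<Longrightarrow> finite K \<Longrightarrow> f \<in> hom I J \<Longrightarrow> g \<in> hom J K \<Longrightarrow> a \<in> A0 K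
        \<Longrightarrow> Ar I J f (Ar J K g a) = Ar I K (cmp K f g) a"
  unfolding cubical_set_def by (drule conjunct2, drule conjunct2) simp

lemma key:
  assumes cs: "cubical_set A0 Ar"
    and iso: "nat_iso A0 Ar (Exp0 A0 Ar) ExpR (const_map Ar)"
    and J: "finite J" and i: "i \<notin> J" and b: "b \<in> A0 (insert i J)"
  shows "\<exists>a\<in>A0 J. b = Ar (insert i J) J (restrict dm_var J) a"
proof -
  let ?iJ = "insert i J"
  define th where "th = (\<lambda>K x. if finite K \<and> x \<in> hom K J \<times> dM K
      then Ar K ?iJ ((fst x)(i := snd x)) b else undefined)"
  have upd: "f(i := r) \<in> hom K ?iJ" if "f \<in> hom K J" "r \<in> dM K" for f r K
    using that by (auto simp: hom_def PiE_def extensional_def)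
  have fi: "finite ?iJ" using J by simp
  have th: "th \<in> Exp0 A0 Ar J"
    unfolding Exp0_def
  proof (intro CollectI conjI allI impI)
    fix K x assume "\<not> (finite K \<and> x \<in> hom K J \<times> dM K)"
    thus "th K x = undefined" unfolding th_def by auto
  next
    fix K f r assume a: "finite K \<and> f \<in> hom K J \<and> r \<in> dM K"
    thus "th K (f, r) \<in> A0 K" using csC[OF cs _ fi upd[of f K r] b]
      unfolding th_def by simp
  next
    fix K L g f r assume a: "finite K \<and> finite L \<and> g \<in> hom L K \<and> f \<in> hom K J \<and> r \<in> dM K"
    have c: "cmp J g f \<in> hom L J" using a cmp_hom by blast
    have d: "dm_subst g r \<in> dM L" using a dm_subst_in by blast
    have eq: "(cmp J g f)(i := dm_subst g r) = cmp ?iJ g (f(i := r))"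
      unfolding cmp_def using i by (auto simp: fun_eq_iff)
    have "th L (cmp J g f, dm_subst g r) = Ar L ?iJ (cmp ?iJ g (f(i := r))) b"
      using a c d eq by (simp add: th_def)
    also have "\<dots> = Ar L K g (Ar K ?iJ (f(i := r)) b)"
      using csM[OF cs _ _ fi _ upd[of f K r] b] a by simp
    also have "\<dots> = Ar L K g (th K (f, r))" using a by (simp add: th_def)
    finally show "th L (cmp J g f, dm_subst g r) = Ar L K g (th K (f, r))" .
  qed
  obtain \<theta> where t1: "nat_trans (Exp0 A0 Ar) ExpR A0 Ar \<theta>"
    and t2': "\<forall>I y. finite I \<and> y \<in> Exp0 A0 Ar I \<longrightarrow> const_map Ar I (\<theta> I y) = y"
    using conjunct2[OF iso[unfolded nat_iso_def]] by (elim exE conjE) assumption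
  have t2: "const_map Ar I (\<theta> I y) = y" if "finite I" "y \<in> Exp0 A0 Ar I" for I y
    using t2' that by simp
  have t1': "\<theta> I y \<in> A0 I" if "finite I" "y \<in> Exp0 A0 Ar I" for I y
    using conjunct1[OF t1[unfolded nat_trans_def]] that by simp
  define a where "a = \<theta> J th"
  have aA: "a \<in> A0 J" using t1' J th unfolding a_def by simp
  have ca: "const_map Ar J a = th" using t2 J th a_def by simp
  have ih: "restrict dm_var J \<in> hom ?iJ J" by (rule incl_hom) auto
  have vi: "dm_var i \<in> dM ?iJ" by (rule var_in) simp
  have "const_map Ar J a ?iJ (restrict dm_var J, dm_var i) = Ar ?iJ J (restrict dm_var J) a"
    using ih vi fi by (simp add: const_map_def)
  moreover have "th ?iJ (restrict dm_var J, dm_var i) = Ar ?iJ ?iJ (cid ?iJ) b"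
  proof -
    have "(restrict dm_var J)(i := dm_var i) = cid ?iJ"
      unfolding cid_def by (auto simp: fun_eq_iff)
    thus ?thesis using ih vi fi by (simp add: th_def)
  qed
  moreover have "Ar ?iJ ?iJ (cid ?iJ) b = b" using csI[OF cs fi b] .
  ultimately show ?thesis using ca aA by auto
qed

lemma hom_empty0: "hom I {} = {\<lambda>_. undefined}"
  unfolding hom_def by auto

lemma all_from_empty:
  assumes cs: "cubical_set A0 Ar"
    and iso: "nat_iso A0 Ar (Exp0 A0 Ar) ExpR (const_map Ar)"
    and J: "finite J"
  shows "\<forall>b\<in>A0 J. \<exists>c\<in>A0 {}. b = Ar J {} (\<lambda>_. undefined) c"
  using J
proof (induction J rule: finite_induct)
  case empty
  have "cid {} = (\<lambda>_. undefined)" unfolding cid_def by auto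
  then show ?case using csI[OF cs] by fastforce
next
  case (insert i J)
  show ?case
  proof
    fix b assume b: "b \<in> A0 (insert i J)"
    obtain a where a: "a \<in> A0 J" "b = Ar (insert i J) J (restrict dm_var J) a"
      using key[OF cs iso insert(1,2) b] by blast
    obtain c where c: "c \<in> A0 {}" "a = Ar J {} (\<lambda>_. undefined) c" using insert(3) a(1) by blast
    have ih: "restrict dm_var J \<in> hom (insert i J) J" by (rule incl_hom) auto
    have "b = Ar (insert i J) {} (cmp {} (restrict dm_var J) (\<lambda>_. undefined)) c"
      using csM[OF cs _ _ _ ih _ c(1)] a c insert(1) hom_empty0 by simp
    moreover have "cmp {} (restrict dm_var J) (\<lambda>_. undefined) = (\<lambda>_. undefined)"
      unfolding cmp_def by auto
    ultimately show "\<exists>c\<in>A0 {}. b = Ar (insert i J) {} (\<lambda>_. undefined) c" using c by auto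
  qed
qed

theorem mainTheorem3:
  fixes A0 :: "nat set \<Rightarrow> 'a set"
    and Ar :: "nat set \<Rightarrow> nat set \<Rightarrow> (nat \<Rightarrow> dm) \<Rightarrow> 'a \<Rightarrow> 'a"
  assumes "cubical_set A0 Ar"
    and "nat_iso A0 Ar (Exp0 A0 Ar) ExpR (const_map Ar)"
  shows "\<exists>a :: 'a set. isomorphic A0 Ar (Delta0 a) DeltaR"
proof -
  note cs = assms(1)
  define u :: "nat \<Rightarrow> dm" where "u = (\<lambda>_. undefined)"
  define e where "e = (\<lambda>I::nat set. restrict (\<lambda>_. abs_dm DZero) I)"
  have e: "e I \<in> hom {} I" for I
    unfolding e_def hom_def dM_def by auto
  have u: "u \<in> hom I {}" for I using hom_empty0 u_def by auto
  have cid0: "cid {} = u" unfolding cid_def u_def by auto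
  have cmpu: "cmp {} f u = u" for f unfolding cmp_def u_def by auto
  have bk: "Ar {} I (e I) (Ar I {} u c) = c" if "finite I" "c \<in> A0 {}" for I c
  proof -
    have "Ar {} I (e I) (Ar I {} u c) = Ar {} {} (cmp {} (e I) u) c"
      using csM[OF cs _ _ _ e u] that by simp
    also have "\<dots> = c" using csI[OF cs _ that(2)] cmpu cid0 by simp
    finally show ?thesis .
  qed
  have rep: "\<exists>c\<in>A0 {}. b = Ar I {} u c" if "finite I" "b \<in> A0 I" for I b
    using all_from_empty[OF cs assms(2) that(1)] that(2) u_def by blast
  have comp: "Ar I J f (Ar J {} u c) = Ar I {} u c"
    if "finite I" "finite J" "f \<in> hom I J" "c \<in> A0 {}" for I J f c
    using csM[OF cs _ _ _ that(3) u that(4)] that cmpu by simp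
  define \<eta> where "\<eta> = (\<lambda>I. Ar {} I (e I))"
  define \<theta> where "\<theta> = (\<lambda>(I::nat set). Ar I {} u)"
  have "nat_iso A0 Ar (Delta0 (A0 {})) DeltaR \<eta>"
    unfolding nat_iso_def
  proof (intro conjI exI[of _ \<theta>])
    show "nat_trans A0 Ar (Delta0 (A0 {})) DeltaR \<eta>"
      unfolding nat_trans_def
    proof (intro conjI allI impI)
      fix I a assume a: "finite I \<and> a \<in> A0 I"
      thus "\<eta> I a \<in> Delta0 (A0 {}) I"
        using csC[OF cs _ _ e] unfolding \<eta>_def Delta0_def by simp
    next
      fix I J f a assume a: "finite I \<and> finite J \<and> f \<in> hom I J \<and> a \<in> A0 J"
      then obtain c where c: "c \<in> A0 {}" "a = Ar J {} u c" using rep by blast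
      show "\<eta> I (Ar I J f a) = DeltaR I J f (\<eta> J a)"
        unfolding DeltaR_def \<eta>_def using a c comp bk by simp
    qed
    show "nat_trans (Delta0 (A0 {})) DeltaR A0 Ar \<theta>"
      unfolding nat_trans_def
    proof (intro conjI allI impI)
      fix I c assume a: "finite I \<and> c \<in> Delta0 (A0 {}) I"
      thus "\<theta> I c \<in> A0 I"
        using csC[OF cs _ _ u] unfolding \<theta>_def Delta0_def by simp
    next
      fix I J f c assume a: "finite I \<and> finite J \<and> f \<in> hom I J \<and> c \<in> Delta0 (A0 {}) J"
      thus "\<theta> I (DeltaR I J f c) = Ar I J f (\<theta> J c)"
        unfolding DeltaR_def \<theta>_def Delta0_def using comp by simp
    qed
    show "\<forall>I a. finite I \<and> a \<in> A0 I \<longrightarrow> \<theta> I (\<eta> I a) = a"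
    proof (intro allI impI)
      fix I a assume a: "finite I \<and> a \<in> A0 I"
      then obtain c where c: "c \<in> A0 {}" "a = Ar I {} u c" using rep by blast
      thus "\<theta> I (\<eta> I a) = a" unfolding \<theta>_def \<eta>_def using a bk by simp
    qed
    show "\<forall>I b. finite I \<and> b \<in> Delta0 (A0 {}) I \<longrightarrow> \<eta> I (\<theta> I b) = b"
      unfolding \<theta>_def \<eta>_def Delta0_def using bk by simp
  qed
  thus ?thesis unfolding isomorphic_def by blast
qed

end
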